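(* Let $s=(s_{ik})$ be an $N\times K$ matrix with i.i.d. $\mathcal N(0,1)$ entries, $K/N=\beta$. For $x^0\in\{\pm1\}^K$ let $s^0$ be the $N\times K$ matrix with entries $s_{ik}x^0_k$, and let $\mathbf 1$ denote the all-ones vector in $\mathbb R^K$. For $B>0$ define $$G=\{s:\ \|s^0(x-\mathbf 1)\|^2\le BN\ \text{for all } x,x^0\in\{\pm1\}^K\}.$$ Then $\mathbb P(G^c)\le 3^K2^{N/2}e^{-\frac{B}{16\beta}}$. *)

theory Defs
  imports "HOL-Probability.Probability"
begin

definition pm1_vecs :: "nat \<Rightarrow> (nat \<Rightarrow> real) set" where
  "pm1_vecs K = {x. \<forall>k<K. x k = -1 \<or> x k = 1}"

definition sqnorm_s0 :: "nat \<Rightarrow> nat \<Rightarrow> (nat \<Rightarrow> nat \<Rightarrow> real) \<Rightarrow> (nat \<Rightarrow> real) \<Rightarrow> (nat \<Rightarrow> real) \<Rightarrow> real" where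
  "sqnorm_s0 N K s x0 x = (\<Sum>i<N. (\<Sum>k<K. (s i k * x0 k) * (x k - 1))\<^sup>2)"

definition good_event :: "nat \<Rightarrow> nat \<Rightarrow> real \<Rightarrow> (nat \<Rightarrow> nat \<Rightarrow> real) \<Rightarrow> bool" where
  "good_event N K B s \<longleftrightarrow> (\<forall>x\<in>pm1_vecs K. \<forall>x0\<in>pm1_vecs K. sqnorm_s0 N K s x0 x \<le> B * real N)"

end

theory Submission
  imports Defs
begin

lemma nd_identity:
  assumes "v > 0"
  shows "normal_density 0 (sqrt v) x * exp (x^2 / (4 * v)) = sqrt 2 * normal_density 0 (sqrt (2 * v)) x"
proof -
  have e: "exp (- (x\<^sup>2 / (2 * v))) * exp (x^2/(4 * v)) = exp (- (x\<^sup>2 / (4 * v)))"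
    unfolding mult_exp_exp using assms by (simp add: field_simps)
  have s: "sqrt (4 * pi * v) = sqrt 2 * sqrt (2*pi * v)"
    by (simp add: real_sqrt_mult[symmetric] algebra_simps)
  have "normal_density 0 (sqrt v) x * exp (x^2 / (4 * v)) = exp (- (x\<^sup>2 / (2 * v))) * exp (x^2/(4 * v)) / sqrt (2 * pi * v)"
    unfolding normal_density_def using assms by simp
  also have "\<dots> = sqrt 2 * exp (- (x\<^sup>2 / (4 * v))) / sqrt (4 * pi * v)"
    unfolding e s by simp
  also have "\<dots> = sqrt 2 * normal_density 0 (sqrt (2 * v)) x"
    unfolding normal_density_def using assms by simp
  finally show ?thesis .
qed

lemma (in prob_space) nn_exp_sq:
  assumes D: "distributed M lborel Y (normal_density 0 (sqrt v))" and v: "v > 0"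
  shows "(\<integral>\<^sup>+\<omega>. ennreal (exp ((Y \<omega>)^2 / (4* v))) \<partial>M) = ennreal (sqrt 2)"
proof -
  have "(\<integral>\<^sup>+\<omega>. ennreal (exp ((Y \<omega>)^2 / (4* v))) \<partial>M) =
     (\<integral>\<^sup>+x. ennreal (normal_density 0 (sqrt v) x) * ennreal (exp (x^2 / (4* v))) \<partial>lborel)"
    by (rule distributed_nn_integral[OF D, symmetric]) simp
  also have "\<dots> = (\<integral>\<^sup>+x. ennreal (sqrt 2) * ennreal (normal_density 0 (sqrt (2* v)) x) \<partial>lborel)"
    by (intro nn_integral_cong) (simp add: ennreal_mult'[symmetric] nd_identity[OF v])
  also have "\<dots> = ennreal (sqrt 2) * (\<integral>\<^sup>+x. ennreal (normal_density 0 (sqrt (2* v)) x) \<partial>lborel)"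
    by (rule nn_integral_cmult) simp
  also have "(\<integral>\<^sup>+x. ennreal (normal_density 0 (sqrt (2* v)) x) \<partial>lborel) = 1"
    using v by (subst nn_integral_eq_integral) (auto intro!: integrable_normal_density integral_normal_density)
  finally show ?thesis by simp
qed

lemma (in prob_space) Y_normal:
  fixes s :: "nat \<Rightarrow> nat \<Rightarrow> 'a \<Rightarrow> real" and c :: "nat \<Rightarrow> real"
  assumes ind: "indep_vars (\<lambda>_. borel) (\<lambda>(i, k). s i k) ({..<N} \<times> {..<K})"
    and dist: "\<And>i k. i < N \<Longrightarrow> k < K \<Longrightarrow> distributed M lborel (s i k) std_normal_density"
    and v: "v = (\<Sum>k<K. (c k)^2)" "v > 0" and i: "i < N"
  shows "distributed M lborel (\<lambda>\<omega>. \<Sum>k<K. s i k \<omega> * c k) (normal_density 0 (sqrt v))"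
proof -
  define J where "J = {k\<in>{..<K}. c k \<noteq> 0}"
  have finJ: "finite J" unfolding J_def by simp
  have Jne: "J \<noteq> {}"
  proof
    assume "J = {}"
    then have "\<And>k. k < K \<Longrightarrow> c k = 0" unfolding J_def by auto
    then have "v = 0" using v(1) by simp
    with v(2) show False by simp
  qed
  have sumeq: "\<And>\<omega>. (\<Sum>k<K. s i k \<omega> * c k) = (\<Sum>k\<in>J. s i k \<omega> * c k)"
    unfolding J_def by (rule sum.mono_neutral_right) auto
  have veq: "v = (\<Sum>k\<in>J. (c k)^2)"
    unfolding v(1) J_def by (rule sum.mono_neutral_right) auto
  have ind1: "indep_vars (\<lambda>k. PiM {(i,k)} (\<lambda>_. borel))
      (\<lambda>k \<omega>. restrict (\<lambda>p. (\<lambda>(i, k). s i k) p \<omega>) {(i,k)}) J"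
    by (rule indep_vars_restrict[OF ind, where K="\<lambda>k. {(i,k)}"]) (auto simp: J_def i disjoint_family_on_def)
  have ind2: "indep_vars (\<lambda>_. borel) (\<lambda>k \<omega>. (\<lambda>f. f (i,k) * c k) (restrict (\<lambda>p. (\<lambda>(i, k). s i k) p \<omega>) {(i,k)})) J"
    by (rule indep_vars_compose2[OF ind1]) measurable
  have ind3: "indep_vars (\<lambda>_. borel) (\<lambda>k \<omega>. s i k \<omega> * c k) J"
    using ind2 by simp
  have dk: "distributed M lborel (\<lambda>\<omega>. s i k \<omega> * c k) (normal_density 0 \<bar>c k\<bar>)" if "k \<in> J" for k
  proof -
    have "k < K" "c k \<noteq> 0" using that unfolding J_def by auto
    from normal_density_affine[OF dist[OF i \<open>k<K\<close>], of "c k" 0] \<open>c k \<noteq> 0\<close>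
    show ?thesis by (simp add: mult.commute)
  qed
  have "distributed M lborel (\<lambda>\<omega>. \<Sum>k\<in>J. s i k \<omega> * c k) (normal_density (\<Sum>k\<in>J. 0) (sqrt (\<Sum>k\<in>J. \<bar>c k\<bar>^2)))"
    by (rule sum_indep_normal[OF finJ Jne ind3]) (auto simp: J_def dk)
  then show ?thesis unfolding sumeq veq by simp
qed

lemma (in prob_space) chernoff_c:
  fixes s :: "nat \<Rightarrow> nat \<Rightarrow> 'a \<Rightarrow> real" and c :: "nat \<Rightarrow> real"
  assumes ind: "indep_vars (\<lambda>_. borel) (\<lambda>(i, k). s i k) ({..<N} \<times> {..<K})"
    and dist: "\<And>i k. i < N \<Longrightarrow> k < K \<Longrightarrow> distributed M lborel (s i k) std_normal_density"
    and v: "v = (\<Sum>k<K. (c k)^2)" "v > 0"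
  shows "emeasure M {\<omega>\<in>space M. b \<le> (\<Sum>i<N. (\<Sum>k<K. s i k \<omega> * c k)^2)}
          \<le> ennreal (exp (- (1/(4 * v)) * b) * 2 powr (real N / 2))"
proof -
  define t where "t = 1/(4 * v)"
  have t: "t > 0" using v unfolding t_def by simp
  have ms: "s i k \<in> borel_measurable M" if "i < N" "k < K" for i k
    using distributed_measurable[OF dist[OF that]] by simp
  define Y where "Y i \<omega> = (\<Sum>k<K. s i k \<omega> * c k)" for i \<omega>
  have mY: "(\<lambda>\<omega>. (\<Sum>i<N. (Y i \<omega>)^2) * indicator (space M) \<omega>) \<in> borel_measurable M"
    unfolding Y_def
    by (intro borel_measurable_times borel_measurable_sum borel_measurable_power
        borel_measurable_indicator ms) auto
  have "emeasure M {\<omega>\<in>space M. b \<le> (\<Sum>i<N. (Y i \<omega>)^2)}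
       \<le> ennreal (exp (- t * b)) * (\<integral>\<^sup>+\<omega>. ennreal (exp (t * (\<Sum>i<N. (Y i \<omega>)^2))) * indicator (space M) \<omega> \<partial>M)"
    by (rule Chernoff_ineq_nn_integral_ge[OF t sets.top mY])
  also have "(\<integral>\<^sup>+\<omega>. ennreal (exp (t * (\<Sum>i<N. (Y i \<omega>)^2))) * indicator (space M) \<omega> \<partial>M)
      = (\<integral>\<^sup>+\<omega>. (\<Prod>i<N. ennreal (exp ((Y i \<omega>)^2 / (4 * v)))) \<partial>M)"
    by (intro nn_integral_cong)
      (simp add: t_def sum_distrib_left exp_sum prod_ennreal)
  also have "\<dots> = (\<Prod>i<N. (\<integral>\<^sup>+\<omega>. ennreal (exp ((Y i \<omega>)^2 / (4 * v))) \<partial>M))"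
  proof (rule indep_vars_nn_integral)
    have ind1: "indep_vars (\<lambda>i. PiM ({i} \<times> {..<K}) (\<lambda>_. borel))
      (\<lambda>i \<omega>. restrict (\<lambda>p. (\<lambda>(i, k). s i k) p \<omega>) ({i} \<times> {..<K})) {..<N}"
      by (rule indep_vars_restrict[OF ind, where K="\<lambda>i. {i} \<times> {..<K}"])
        (auto simp: disjoint_family_on_def)
    have ind2: "indep_vars (\<lambda>_. borel) (\<lambda>i \<omega>. (\<lambda>f. ennreal (exp ((\<Sum>k<K. f (i,k) * c k)^2 / (4 * v))))
        (restrict (\<lambda>p. (\<lambda>(i, k). s i k) p \<omega>) ({i} \<times> {..<K}))) {..<N}"
    proof (rule indep_vars_compose2[OF ind1])
      fix i assume "i \<in> {..<N}"
      show "(\<lambda>f. ennreal (exp ((\<Sum>k<K. f (i,k) * c k)^2 / (4 * v)))) \<in> borel_measurable (PiM ({i} \<times> {..<K}) (\<lambda>_. borel))"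
        by (intro measurable_compose[OF _ measurable_ennreal] borel_measurable_exp
            borel_measurable_divide borel_measurable_power borel_measurable_sum borel_measurable_times
            measurable_component_singleton borel_measurable_const) auto
    qed
    show "indep_vars (\<lambda>_. borel) (\<lambda>i \<omega>. ennreal (exp ((Y i \<omega>)^2 / (4 * v)))) {..<N}"
      using ind2 unfolding Y_def by simp
  qed auto
  also have "\<dots> = (\<Prod>i<N. ennreal (sqrt 2))"
    by (intro prod.cong refl nn_exp_sq v(2)) (simp add: Y_def Y_normal[OF ind dist v])
  also have "\<dots> = ennreal (2 powr (real N / 2))"
  proof -
    have "(2 powr (1/2::real)) ^ N = 2 powr (real N / 2)"
      by (simp add: powr_realpow[symmetric] powr_powr)
    then show ?thesis
      by (simp add: powr_half_sqrt[symmetric] ennreal_power)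
  qed
  finally show ?thesis unfolding Y_def t_def by (simp add: ennreal_mult')
qed

lemma (in prob_space) bound_c:
  fixes s :: "nat \<Rightarrow> nat \<Rightarrow> 'a \<Rightarrow> real" and c :: "nat \<Rightarrow> real"
  assumes ind: "indep_vars (\<lambda>_. borel) (\<lambda>(i, k). s i k) ({..<N} \<times> {..<K})"
    and dist: "\<And>i k. i < N \<Longrightarrow> k < K \<Longrightarrow> distributed M lborel (s i k) std_normal_density"
    and c: "\<And>k. k < K \<Longrightarrow> c k \<in> {0, 2, -2}" and NK: "N > 0" "K > 0" and B: "B > 0"
  shows "measure M {\<omega>\<in>space M. B * real N < (\<Sum>i<N. (\<Sum>k<K. s i k \<omega> * c k)^2)}
          \<le> 2 powr (real N / 2) * exp (- B / (16 * (real K / real N)))"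
proof (cases "(\<Sum>k<K. (c k)^2) = 0")
  case True
  then have "\<And>k. k < K \<Longrightarrow> c k = 0"
    by (subst (asm) sum_nonneg_eq_0_iff) auto
  then have e: "{\<omega>\<in>space M. B * real N < (\<Sum>i<N. (\<Sum>k<K. s i k \<omega> * c k)^2)} = {}"
    using B NK by (auto simp: not_less)
  show ?thesis unfolding e by simp
next
  case False
  define v where "v = (\<Sum>k<K. (c k)^2)"
  have vpos: "v > 0" using False unfolding v_def by (simp add: sum_nonneg order_le_neq_trans)
  have vle: "v \<le> 4 * real K"
  proof -
    have "v \<le> (\<Sum>k<K. 4)" unfolding v_def
    proof (rule sum_mono)
      fix k assume "k \<in> {..<K}"
      then have "c k = 0 \<or> c k = 2 \<or> c k = -2" using c by auto
      then show "(c k)^2 \<le> 4" by auto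
    qed
    then show ?thesis by simp
  qed
  have "emeasure M {\<omega>\<in>space M. B * real N < (\<Sum>i<N. (\<Sum>k<K. s i k \<omega> * c k)^2)}
      \<le> emeasure M {\<omega>\<in>space M. B * real N \<le> (\<Sum>i<N. (\<Sum>k<K. s i k \<omega> * c k)^2)}"
  proof (rule emeasure_mono)
    have ms: "s i k \<in> borel_measurable M" if "i < N" "k < K" for i k
      using distributed_measurable[OF dist[OF that]] by simp
    have [measurable]: "(\<lambda>\<omega>. (\<Sum>i<N. (\<Sum>k<K. s i k \<omega> * c k)^2)) \<in> borel_measurable M"
      by (intro borel_measurable_sum borel_measurable_power borel_measurable_times ms
          borel_measurable_const) auto
    show "{\<omega>\<in>space M. B * real N \<le> (\<Sum>i<N. (\<Sum>k<K. s i k \<omega> * c k)^2)} \<in> sets M"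
      by measurable
  qed auto
  also have "\<dots> \<le> ennreal (exp (- (1/(4 * v)) * (B * real N)) * 2 powr (real N / 2))"
    by (rule chernoff_c[OF ind dist v_def vpos])
  finally have "measure M {\<omega>\<in>space M. B * real N < (\<Sum>i<N. (\<Sum>k<K. s i k \<omega> * c k)^2)}
      \<le> exp (- (1/(4 * v)) * (B * real N)) * 2 powr (real N / 2)"
    by (simp add: emeasure_eq_measure ennreal_le_iff)
  also have "\<dots> \<le> exp (- B / (16 * (real K / real N))) * 2 powr (real N / 2)"
  proof -
    have "B / (16 * (real K / real N)) = B * real N / (16 * real K)" using NK by (simp add: field_simps)
    also have "\<dots> \<le> B * real N / (4 * v)"
      using vle vpos B NK by (intro divide_left_mono) auto
    finally show ?thesis by (intro mult_right_mono) auto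
  qed
  finally show ?thesis by (simp add: mult.commute)
qed


theorem lemma8:
  fixes M :: "'a measure" and s :: "nat \<Rightarrow> nat \<Rightarrow> 'a \<Rightarrow> real"
    and N K :: nat and B \<beta> :: real
  assumes "prob_space M"
    and "prob_space.indep_vars M (\<lambda>_. borel) (\<lambda>(i, k). s i k) ({..<N} \<times> {..<K})"
    and "\<And>i k. i < N \<Longrightarrow> k < K \<Longrightarrow> distributed M lborel (s i k) std_normal_density"
    and "\<beta> = real K / real N"
    and "B > 0"
  shows "measure M {\<omega> \<in> space M. \<not> good_event N K B (\<lambda>i k. s i k \<omega>)}
           \<le> 3 ^ K * 2 powr (real N / 2) * exp (- B / (16 * \<beta>))"
proof -
  interpret prob_space M by fact
  note ind = assms(2) and dist = assms(3)
  show ?thesis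
  proof (cases "N = 0 \<or> K = 0")
    case True
    then have "\<beta> = 0" using assms(4) by auto
    have "(1::real) \<le> 3 ^ K" by simp
    moreover have "(1::real) \<le> 2 powr (real N / 2)" by (rule ge_one_powr_ge_zero) auto
    ultimately have "1 \<le> 3 ^ K * 2 powr (real N / 2) * exp (- B / (16 * \<beta>))"
      using \<open>\<beta> = 0\<close> by (simp del: one_le_power) (metis mult_mono' mult_1 zero_le_one)
    then show ?thesis using prob_le_1 order_trans by blast
  next
    case False
    then have NK: "N > 0" "K > 0" by auto
    define C where "C = PiE {..<K} (\<lambda>_. {0, 2, -2::real})"
    define E where "E c = {\<omega>\<in>space M. B * real N < (\<Sum>i<N. (\<Sum>k<K. s i k \<omega> * c k)^2)}" for c
    have finC: "finite C" unfolding C_def by (intro finite_PiE) auto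
    have cardC: "card C = 3 ^ K" unfolding C_def by (simp add: card_PiE numeral_eq_Suc)
    have ms: "s i k \<in> borel_measurable M" if "i < N" "k < K" for i k
      using distributed_measurable[OF dist[OF that]] by simp
    have Esets: "E c \<in> sets M" for c
    proof -
      have [measurable]: "(\<lambda>\<omega>. (\<Sum>i<N. (\<Sum>k<K. s i k \<omega> * c k)^2)) \<in> borel_measurable M"
        by (intro borel_measurable_sum borel_measurable_power borel_measurable_times ms
            borel_measurable_const) auto
      show ?thesis unfolding E_def by measurable
    qed
    have sub: "{\<omega> \<in> space M. \<not> good_event N K B (\<lambda>i k. s i k \<omega>)} \<subseteq> (\<Union>c\<in>C. E c)"
    proof
      fix \<omega> assume "\<omega> \<in> {\<omega> \<in> space M. \<not> good_event N K B (\<lambda>i k. s i k \<omega>)}"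
      then obtain x x0 where om: "\<omega> \<in> space M" and x: "x \<in> pm1_vecs K" and x0: "x0 \<in> pm1_vecs K"
        and gt: "\<not> sqnorm_s0 N K (\<lambda>i k. s i k \<omega>) x0 x \<le> B * real N"
        unfolding good_event_def by auto
      define c where "c = restrict (\<lambda>k. x0 k * (x k - 1)) {..<K}"
      have "c \<in> C" unfolding C_def c_def
      proof (rule PiE_I)
        fix k assume "k \<in> {..<K}"
        then have "x k = -1 \<or> x k = 1" "x0 k = -1 \<or> x0 k = 1" using x x0 unfolding pm1_vecs_def by auto
        then show "(\<lambda>k\<in>{..<K}. x0 k * (x k - 1)) k \<in> {0, 2, -2}" using \<open>k \<in> {..<K}\<close> by auto
      qed auto
      moreover have "sqnorm_s0 N K (\<lambda>i k. s i k \<omega>) x0 x = (\<Sum>i<N. (\<Sum>k<K. s i k \<omega> * c k)^2)"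
        unfolding sqnorm_s0_def c_def by (intro sum.cong refl arg_cong[where f="\<lambda>z. z^2"]) auto
      ultimately show "\<omega> \<in> (\<Union>c\<in>C. E c)" using gt om unfolding E_def by force
    qed
    have "measure M {\<omega> \<in> space M. \<not> good_event N K B (\<lambda>i k. s i k \<omega>)} \<le> measure M (\<Union>c\<in>C. E c)"
      using sub finC Esets by (intro finite_measure_mono) auto
    also have "\<dots> \<le> (\<Sum>c\<in>C. measure M (E c))"
      using finC Esets by (intro finite_measure_subadditive_finite) auto
    also have "\<dots> \<le> (\<Sum>c\<in>C. 2 powr (real N / 2) * exp (- B / (16 * (real K / real N))))"
    proof (rule sum_mono)
      fix c assume "c \<in> C"
      then have "\<And>k. k < K \<Longrightarrow> c k \<in> {0, 2, -2}" unfolding C_def by auto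
      note bc = bound_c[OF ind dist this NK assms(5)]
      show "measure M (E c) \<le> 2 powr (real N / 2) * exp (- B / (16 * (real K / real N)))"
        unfolding E_def by (rule bc)
    qed
    also have "\<dots> = 3 ^ K * 2 powr (real N / 2) * exp (- B / (16 * \<beta>))"
      using cardC assms(4) by simp
    finally show ?thesis .
  qed
qed

end
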